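(* Let $(\rho,\sigma)\in\mathfrak V$ with $\sigma\le0$ and $P,F\in W^{(l)}\setminus\{0\}$. Assume $F$ is $(\rho,\sigma)$-homogeneous and $[P,F]_{\rho,\sigma}=\ell_{\rho,\sigma}(P)$. Then $f^{(l)}_{F,\rho,\sigma}$ is separable and every irreducible factor of $f^{(l)}_{P,\rho,\sigma}$ divides $f^{(l)}_{F,\rho,\sigma}$.
   Context: $K$ is a field of characteristic zero, $l\in\mathbb{N}$. $W^{(l)}$ is the associative $K$-algebra with $K$-basis $\{X^{i/l}Y^j:i\in\mathbb{Z},j\in\mathbb{N}_0\}$, powers of $X$ multiplying as Laurent monomials and $[Y,X^\alpha]=\alpha X^{\alpha-1}$ for $\alpha\in\frac1l\mathbb{Z}$. $L^{(l)}=K[x^{\pm1/l},y]$, $\Psi^{(l)}(X^{i/l}Y^j)=x^{i/l}y^j$ ($K$-linear); supports are sets of exponents with nonzero coefficient. $\mathfrak V=\{(\rho,\sigma)\in\mathbb{Z}^2:\gcd(\rho,\sigma)=1,\rho+\sigma>0\}$. For $P\ne0$, $v_{\rho,\sigma}(P)=\max\{\rho a+\sigma b:(a,b)\in\mathrm{Supp}(P)\}$, $\ell_{\rho,\sigma}(P)$ = sum of terms of $\Psi^{(l)}(P)$ attaining it; $F$ is $(\rho,\sigma)$-homogeneous if $\Psi^{(l)}(F)=\ell_{\rho,\sigma}(F)$. $[P,Q]_{\rho,\sigma}:=0$ if $[P,Q]=0$ or $v_{\rho,\sigma}([P,Q])<v_{\rho,\sigma}(P)+v_{\rho,\sigma}(Q)-(\rho+\sigma)$,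 else $\ell_{\rho,\sigma}([P,Q])$. For $\sigma\le0$ and $P\ne0$, write $\ell_{\rho,\sigma}(P)=\sum_{i=0}^\gamma a_ix^{\frac rl-\frac{i\sigma}\rho}y^{s+i}$ with $a_0\ne0\ne a_\gamma$, and $f^{(l)}_{P,\rho,\sigma}:=\sum_{i=0}^\gamma a_ix^i\in K[x]$. *)

theory Defs
  imports "HOL-Computational_Algebra.Polynomial" "HOL-Computational_Algebra.Polynomial_Factorial"
begin

text \<open>Elements of W^(l) are represented by their coefficient functions:
  P (i,j) is the coefficient of the basis element X^(i/l) Y^j. The same coefficient
  functions represent elements of L^(l) = K[x^(1/l), x^(-1/l), y] (coefficient of x^(i/l) y^j),
  so the K-linear map Psi^(l) is the identity on coefficient functions.\<close>

type_synonym 'a wel = "int \<times> nat \<Rightarrow> 'a"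

definition wsupp :: "'a::zero wel \<Rightarrow> (int \<times> nat) set" where
  "wsupp P = {e. P e \<noteq> 0}"

definition welem :: "'a::zero wel \<Rightarrow> bool" where
  "welem P \<longleftrightarrow> finite (wsupp P)"

definition falling :: "'a::field \<Rightarrow> nat \<Rightarrow> 'a" where
  "falling \<alpha> m = (\<Prod>t<m. \<alpha> - of_nat t)"

text \<open>Product in W^(l): (X^(a/l) Y^j)(X^(b/l) Y^k)
   = sum_m binom(j,m) (b/l)_m X^((a+b-m l)/l) Y^(j+k-m),
  which follows from [Y, X^alpha] = alpha X^(alpha-1).\<close>
definition wmult :: "nat \<Rightarrow> 'a::field_char_0 wel \<Rightarrow> 'a wel \<Rightarrow> 'a wel" where
  "wmult l P Q = (\<lambda>(c,d). \<Sum>(a,j)\<in>wsupp P. \<Sum>(b,k)\<in>wsupp Q. \<Sum>m\<le>j.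
      (if a + b - int m * int l = c \<and> j + k - m = d
       then P (a,j) * Q (b,k) * of_nat (j choose m) * falling (of_int b / of_nat l) m
       else 0))"

definition wcomm :: "nat \<Rightarrow> 'a::field_char_0 wel \<Rightarrow> 'a wel \<Rightarrow> 'a wel" where
  "wcomm l P Q = (\<lambda>e. wmult l P Q e - wmult l Q P e)"

definition Vdir :: "(int \<times> int) set" where
  "Vdir = {(\<rho>,\<sigma>). gcd \<rho> \<sigma> = 1 \<and> \<rho> + \<sigma> > 0}"

definition wt :: "nat \<Rightarrow> int \<Rightarrow> int \<Rightarrow> int \<times> nat \<Rightarrow> rat" where
  "wt l \<rho> \<sigma> e = of_int \<rho> * (of_int (fst e) / of_nat l) + of_int \<sigma> * of_nat (snd e)"

definition vval :: "nat \<Rightarrow> int \<Rightarrow> int \<Rightarrow> 'a::zero wel \<Rightarrow> rat" where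
  "vval l \<rho> \<sigma> P = Max (wt l \<rho> \<sigma> ` wsupp P)"

definition lead :: "nat \<Rightarrow> int \<Rightarrow> int \<Rightarrow> 'a::zero wel \<Rightarrow> 'a wel" where
  "lead l \<rho> \<sigma> P = (\<lambda>e. if e \<in> wsupp P \<and> wt l \<rho> \<sigma> e = vval l \<rho> \<sigma> P then P e else 0)"

definition homogeneous :: "nat \<Rightarrow> int \<Rightarrow> int \<Rightarrow> 'a::zero wel \<Rightarrow> bool" where
  "homogeneous l \<rho> \<sigma> F \<longleftrightarrow> lead l \<rho> \<sigma> F = F"

definition comm_rs :: "nat \<Rightarrow> int \<Rightarrow> int \<Rightarrow> 'a::field_char_0 wel \<Rightarrow> 'a wel \<Rightarrow> 'a wel" where
  "comm_rs l \<rho> \<sigma> P Q =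
     (if wcomm l P Q = (\<lambda>_. 0) \<or>
         vval l \<rho> \<sigma> (wcomm l P Q) < vval l \<rho> \<sigma> P + vval l \<rho> \<sigma> Q - of_int (\<rho> + \<sigma>)
      then (\<lambda>_. 0) else lead l \<rho> \<sigma> (wcomm l P Q))"

text \<open>f^(l)_{P,rho,sigma}: writing lead(P) = sum_i a_i x^(r/l - i sigma/rho) y^(s+i),
  with s the least y-degree occurring, f = sum_i a_i x^i; i.e. each term of lead(P)
  of y-degree j contributes a_i x^(j-s).\<close>
definition fpol :: "nat \<Rightarrow> int \<Rightarrow> int \<Rightarrow> 'a::field_char_0 wel \<Rightarrow> 'a poly" where
  "fpol l \<rho> \<sigma> P =
     (let L = lead l \<rho> \<sigma> P; s = Min (snd ` wsupp L)
      in \<Sum>e\<in>wsupp L. monom (L e) (snd e - s))"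

definition separable :: "'a::field poly \<Rightarrow> bool" where
  "separable f \<longleftrightarrow> coprime f (pderiv f)"

end

theory Submission
  imports Defs
begin


lemma prime_decomp:
  fixes x q :: "'a::field poly"
  assumes "x \<noteq> 0" "q \<noteq> 0" "\<not> is_unit q"
  shows "\<exists>c w. x = q^c * w \<and> \<not> q dvd w"
  using assms(1)
proof (induction "degree x" arbitrary: x rule: less_induct)
  case less
  show ?case
  proof (cases "q dvd x")
    case False
    then show ?thesis by (rule_tac x=0 in exI) auto
  next
    case True
    then obtain y where y: "x = q * y" by (auto elim: dvdE)
    have "y \<noteq> 0" using less.prems y by auto
    have "degree q > 0" using assms by (auto simp: is_unit_iff_degree)
    hence "degree y < degree x" using y \<open>y \<noteq> 0\<close> assms(2) by (simp add: degree_mult_eq)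
    from less.hyps[OF this \<open>y\<noteq>0\<close>] obtain c w where "y = q^c*w" "\<not> q dvd w" by blast
    then show ?thesis using y by (rule_tac x="Suc c" in exI, rule_tac x=w in exI) (simp add: mult.assoc)
  qed
qed

lemma prime_decomp':
  fixes x q :: "'a::field poly"
  assumes "x \<noteq> 0" "prime_elem q"
  obtains c w where "x = q^c * w" "\<not> q dvd w"
proof -
  have "q \<noteq> 0" "\<not> is_unit q" using assms(2) by (auto simp: prime_elem_def)
  from prime_decomp[OF assms(1) this] that show ?thesis by blast
qed

lemma irr_factor_exists:
  fixes p :: "'a::field poly"
  assumes "p \<noteq> 0" "\<not> is_unit p"
  shows "\<exists>q. irreducible q \<and> q dvd p"
  using assms
proof (induction "degree p" arbitrary: p rule: less_induct)
  case less
  show ?case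
  proof (cases "irreducible p")
    case True then show ?thesis by auto
  next
    case False
    then obtain a b where ab: "p = a*b" "\<not> is_unit a" "\<not> is_unit b"
      using less.prems by (auto simp: irreducible_def)
    have "a \<noteq> 0" "b \<noteq> 0" using ab less.prems by auto
    have "degree b > 0" using ab(3) \<open>b\<noteq>0\<close> by (auto simp: is_unit_iff_degree)
    hence "degree a < degree p" using ab \<open>a\<noteq>0\<close> \<open>b\<noteq>0\<close> by (simp add: degree_mult_eq)
    from less.hyps[OF this \<open>a\<noteq>0\<close> ab(2)] obtain q where "irreducible q" "q dvd a" by blast
    then show ?thesis using ab by auto
  qed
qed

lemma pderiv_pow_dvd:
  fixes A q :: "'a::field_char_0 poly"
  assumes "q^c dvd A"
  shows "q^(c-1) dvd pderiv A"
proof (cases c)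
  case 0 then show ?thesis by simp
next
  case (Suc n)
  from assms obtain w where w: "A = q^c * w" by (auto elim: dvdE)
  have pp: "pderiv (q^Suc n) = smult (of_nat (Suc n)) (q^n) * pderiv q" by (rule pderiv_power_Suc)
  have "pderiv A = pderiv (q^Suc n) * w + q^Suc n * pderiv w" by (simp add: w Suc pderiv_mult)
  also have "\<dots> = q^n * (smult (of_nat c) (pderiv q) * w + q * pderiv w)"
    unfolding pp by (simp add: Suc algebra_simps)
  finally show ?thesis using Suc by simp
qed

lemma prime_not_dvd_pderiv:
  fixes q :: "'a::field_char_0 poly"
  assumes "prime_elem q"
  shows "\<not> q dvd pderiv q"
proof
  assume d: "q dvd pderiv q"
  have "q \<noteq> 0" "\<not> is_unit q" using assms by (auto simp: prime_elem_def)
  hence dq: "degree q > 0" by (auto simp: is_unit_iff_degree)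
  hence "pderiv q \<noteq> 0" by (simp add: pderiv_eq_0_iff)
  from dvd_imp_degree_le[OF d this] have "degree q \<le> degree (pderiv q)" .
  moreover have "degree (pderiv q) = degree q - 1" by (rule degree_pderiv)
  ultimately show False using dq by simp
qed

lemma alg2:
  fixes A G q :: "'a::field_char_0 poly"
  assumes eq: "A = smult cF (pderiv A * G) - smult cP (A * pderiv G)"
    and cF: "cF \<noteq> 0" and A0: "A \<noteq> 0" and q: "prime_elem q" and qA: "q dvd A"
  shows "q dvd G"
proof (rule ccontr)
  assume nG: "\<not> q dvd G"
  obtain c w where Aw: "A = q^c * w" and nw: "\<not> q dvd w" using prime_decomp'[OF A0 q] by blast
  have "c \<noteq> 0" using qA nw Aw by (cases c) auto
  then obtain n where c: "c = Suc n" by (cases c) auto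
  have h: "smult cF (pderiv A * G) = A + smult cP (A * pderiv G)" using eq by (simp add: algebra_simps)
  have "q^c dvd A + smult cP (A * pderiv G)" using Aw by (auto intro!: dvd_add dvd_smult)
  hence d1: "q^c dvd smult cF (pderiv A * G)" using h by simp
  have pp: "pderiv (q^Suc n) = smult (of_nat (Suc n)) (q^n) * pderiv q" by (rule pderiv_power_Suc)
  have pA: "pderiv A = q^n * (smult (of_nat c) (pderiv q) * w) + q^c * pderiv w"
    unfolding Aw c pderiv_mult pp by (simp add: algebra_simps)
  have "smult cF (pderiv A * G) = q^n * smult (cF * of_nat c) (pderiv q * w * G) + q^c * smult cF (pderiv w * G)"
    by (simp add: pA algebra_simps smult_add_right)
  with d1 have "q^c dvd q^n * smult (cF * of_nat c) (pderiv q * w * G) + q^c * smult cF (pderiv w * G)"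
    by simp
  moreover have "q^c dvd q^c * smult cF (pderiv w * G)" by (rule dvd_triv_left)
  ultimately have "q^c dvd q^n * smult (cF * of_nat c) (pderiv q * w * G)"
    using dvd_add_left_iff by blast
  hence "q^n * q dvd q^n * smult (cF * of_nat c) (pderiv q * w * G)" by (simp add: c mult.commute)
  moreover have "q \<noteq> 0" using q by (auto simp: prime_elem_def)
  ultimately have "q dvd smult (cF * of_nat c) (pderiv q * w * G)"
    using dvd_times_left_cancel_iff[of "q^n" q "smult (cF * of_nat c) (pderiv q * w * G)"] by simp
  moreover have "cF * of_nat c \<noteq> 0" using cF c by (simp del: of_nat_Suc)
  ultimately have "q dvd pderiv q * w * G" by (rule dvd_smult_cancel)
  thus False using q nw nG prime_not_dvd_pderiv[OF q] by (simp add: prime_elem_dvd_mult_iff)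
qed

lemma alg1:
  fixes A G q :: "'a::field_char_0 poly"
  assumes eq: "A = smult cF (pderiv A * G) - smult cP (A * pderiv G)"
    and A0: "A \<noteq> 0" and q: "prime_elem q" and e: "e \<ge> 2"
    and qG: "q^e dvd G" and qG': "q^(e-1) dvd pderiv G"
  shows False
proof -
  obtain c w where Aw: "A = q^c * w" and nw: "\<not> q dvd w" using prime_decomp'[OF A0 q] by blast
  have d1: "q^(Suc c) dvd A * pderiv G"
  proof -
    have "q^c * q^(e-1) dvd A * pderiv G" using Aw qG' by (simp add: mult_dvd_mono)
    hence "q^(c + (e-1)) dvd A * pderiv G" by (simp add: power_add)
    moreover have "q^(Suc c) dvd q^(c + (e-1))" by (rule le_imp_power_dvd) (use e in simp)
    ultimately show ?thesis using dvd_trans by blast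
  qed
  have d2: "q^(Suc c) dvd pderiv A * G"
  proof (cases c)
    case 0
    have "q dvd q^e" using e by (simp add: dvd_power)
    hence "q dvd G" using qG by (rule dvd_trans)
    then show ?thesis using 0 by simp
  next
    case (Suc n)
    have "q^n dvd pderiv A" using pderiv_pow_dvd[of q c A] Aw Suc by simp
    hence "q^n * q^e dvd pderiv A * G" using qG by (simp add: mult_dvd_mono)
    hence "q^(n + e) dvd pderiv A * G" by (simp add: power_add)
    moreover have "q^(Suc c) dvd q^(n + e)" by (rule le_imp_power_dvd) (use e Suc in simp)
    ultimately show ?thesis using dvd_trans by blast
  qed
  have "q^(Suc c) dvd A" using eq d1 d2 by (metis dvd_diff dvd_smult)
  hence "q^c * q dvd q^c * w" using Aw by (simp add: mult.commute)
  moreover have "q \<noteq> 0" using q by (auto simp: prime_elem_def)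
  ultimately have "q dvd w" by simp
  thus False using nw by simp
qed



definition pos :: "nat \<Rightarrow> int \<times> nat \<Rightarrow> int \<times> nat \<Rightarrow> nat \<Rightarrow> int \<times> nat" where
  "pos l x y m = (fst x + fst y - int m * int l, snd x + snd y - m)"

definition trm :: "nat \<Rightarrow> 'a::field_char_0 wel \<Rightarrow> 'a wel \<Rightarrow> int \<times> nat \<Rightarrow> int \<times> nat \<Rightarrow> nat \<Rightarrow> 'a" where
  "trm l P Q x y m = P x * Q y * of_nat (snd x choose m) * falling (of_int (fst y) / of_nat l) m"

definition M1 :: "nat \<Rightarrow> 'a::field_char_0 wel \<Rightarrow> 'a wel \<Rightarrow> int \<times> nat \<Rightarrow> 'a" where
  "M1 l P Q e = (\<Sum>x\<in>wsupp P. \<Sum>y\<in>wsupp Q. \<Sum>m\<in>{1..snd x}.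
     if pos l x y m = e then trm l P Q x y m else 0)"

lemma wmult_alt:
  "wmult l P Q e = (\<Sum>x\<in>wsupp P. \<Sum>y\<in>wsupp Q. \<Sum>m\<le>snd x.
     if pos l x y m = e then trm l P Q x y m else 0)"
  unfolding trm_def pos_def by (cases e) (simp add: wmult_def split_def prod_eq_iff conj_commute cong: if_cong)

lemma sum_nz_ex: "sum f A \<noteq> 0 \<Longrightarrow> \<exists>a\<in>A. f a \<noteq> 0"
  by (metis sum.neutral)

lemma wmult_nz:
  assumes "wmult l P Q e \<noteq> 0"
  shows "\<exists>x\<in>wsupp P. \<exists>y\<in>wsupp Q. \<exists>m\<le>snd x. pos l x y m = e"
proof -
  from assms obtain x where x: "x \<in> wsupp P" and
    "(\<Sum>y\<in>wsupp Q. \<Sum>m\<le>snd x. if pos l x y m = e then trm l P Q x y m else 0) \<noteq> 0"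
    unfolding wmult_alt by (blast dest: sum_nz_ex)
  then obtain y where y: "y \<in> wsupp Q" and
    "(\<Sum>m\<le>snd x. if pos l x y m = e then trm l P Q x y m else 0) \<noteq> 0"
    by (blast dest: sum_nz_ex)
  then obtain m where "m \<le> snd x" "(if pos l x y m = e then trm l P Q x y m else 0) \<noteq> 0"
    by (blast dest: sum_nz_ex)
  then show ?thesis using x y by (auto split: if_splits)
qed

lemma wcomm_alt:
  "wcomm l P Q e = M1 l P Q e - M1 l Q P e"
proof -
  have split: "\<And>j. {..j} = insert (0::nat) {1..j}" by auto
  have w: "\<And>P Q. wmult l P Q e = (\<Sum>x\<in>wsupp P. \<Sum>y\<in>wsupp Q.
      if (fst x + fst y, snd x + snd y) = e then P x * Q y else 0) + M1 l P Q e"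
    unfolding wmult_alt M1_def trm_def pos_def
    by (simp add: split sum.distrib falling_def cong: if_cong)
  have sw: "(\<Sum>x\<in>wsupp P. \<Sum>y\<in>wsupp Q.
      if (fst x + fst y, snd x + snd y) = e then P x * Q y else 0) =
     (\<Sum>y\<in>wsupp Q. \<Sum>x\<in>wsupp P.
      if (fst y + fst x, snd y + snd x) = e then Q y * P x else 0)"
    by (subst sum.swap) (intro sum.cong refl, simp add: add.commute mult.commute)
  show ?thesis unfolding wcomm_def w sw by simp
qed

lemma wt_pos:
  assumes "l > 0" "m \<le> snd x"
  shows "wt l \<rho> \<sigma> (pos l x y m) = wt l \<rho> \<sigma> x + wt l \<rho> \<sigma> y - of_nat m * of_int (\<rho> + \<sigma>)"
  using assms by (simp add: wt_def pos_def of_nat_diff field_simps)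

lemma wt_le_vval:
  "finite (wsupp P) \<Longrightarrow> e \<in> wsupp P \<Longrightarrow> wt l \<rho> \<sigma> e \<le> vval l \<rho> \<sigma> P"
  unfolding vval_def by (rule Max_ge) auto

lemma vval_in:
  assumes "finite (wsupp P)" "P \<noteq> (\<lambda>_. 0)"
  shows "\<exists>e\<in>wsupp P. wt l \<rho> \<sigma> e = vval l \<rho> \<sigma> P"
proof -
  have "wsupp P \<noteq> {}" using assms(2) by (auto simp: wsupp_def)
  hence "vval l \<rho> \<sigma> P \<in> wt l \<rho> \<sigma> ` wsupp P" unfolding vval_def using assms(1) by (intro Max_in) auto
  thus ?thesis by auto
qed

lemma wsupp_lead: "wsupp (lead l \<rho> \<sigma> P) = {e\<in>wsupp P. wt l \<rho> \<sigma> e = vval l \<rho> \<sigma> P}"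
  by (auto simp: wsupp_def lead_def)

lemma M1_vanish:
  assumes fP: "finite (wsupp P)" and fQ: "finite (wsupp Q)" and l: "l > 0" and rs: "\<rho> + \<sigma> > 0"
    and e: "wt l \<rho> \<sigma> e > vval l \<rho> \<sigma> P + vval l \<rho> \<sigma> Q - of_int (\<rho> + \<sigma>)"
  shows "M1 l P Q e = 0"
  unfolding M1_def
proof (intro sum.neutral ballI)
  fix x y m assume x: "x \<in> wsupp P" and y: "y \<in> wsupp Q" and m: "m \<in> {1..snd x}"
  have "wt l \<rho> \<sigma> (pos l x y m) = wt l \<rho> \<sigma> x + wt l \<rho> \<sigma> y - of_nat m * of_int (\<rho> + \<sigma>)"
    using m l by (intro wt_pos) auto
  also have "\<dots> \<le> vval l \<rho> \<sigma> P + vval l \<rho> \<sigma> Q - of_int (\<rho> + \<sigma>)"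
  proof -
    have "wt l \<rho> \<sigma> x \<le> vval l \<rho> \<sigma> P" "wt l \<rho> \<sigma> y \<le> vval l \<rho> \<sigma> Q"
      using wt_le_vval[OF fP x] wt_le_vval[OF fQ y] by auto
    moreover have "of_nat m * (of_int (\<rho> + \<sigma>)::rat) \<ge> 1 * of_int (\<rho> + \<sigma>)"
      using m rs by (intro mult_right_mono) auto
    ultimately show ?thesis by simp
  qed
  finally have "pos l x y m \<noteq> e" using e by auto
  thus "(if pos l x y m = e then trm l P Q x y m else 0) = 0" by simp
qed

lemma swap3: "(\<Sum>e\<in>S. \<Sum>x\<in>A. \<Sum>y\<in>B. \<Sum>m\<in>C x. f e x y m) = (\<Sum>x\<in>A. \<Sum>y\<in>B. \<Sum>m\<in>C x. \<Sum>e\<in>S. f e x y m)"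
  by (simp only: sum.swap[where A=S])

lemma monom_if: "monom (if c then a else 0) n = (if c then monom a n else 0)"
  by simp

lemma M1_exchange:
  assumes "finite S"
  shows "(\<Sum>e\<in>S. monom (M1 l P Q e) (h e)) = (\<Sum>x\<in>wsupp P. \<Sum>y\<in>wsupp Q. \<Sum>m\<in>{1..snd x}.
     if pos l x y m \<in> S then monom (trm l P Q x y m) (h (pos l x y m)) else 0)"
proof -
  have "(\<Sum>e\<in>S. monom (M1 l P Q e) (h e)) = (\<Sum>e\<in>S. \<Sum>x\<in>wsupp P. \<Sum>y\<in>wsupp Q. \<Sum>m\<in>{1..snd x}.
     if pos l x y m = e then monom (trm l P Q x y m) (h e) else 0)"
    unfolding M1_def monom_sum monom_if by (intro sum.cong refl)
  also have "\<dots> = (\<Sum>x\<in>wsupp P. \<Sum>y\<in>wsupp Q. \<Sum>m\<in>{1..snd x}. \<Sum>e\<in>S.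
     if pos l x y m = e then monom (trm l P Q x y m) (h e) else 0)"
    by (rule swap3)
  also have "\<dots> = (\<Sum>x\<in>wsupp P. \<Sum>y\<in>wsupp Q. \<Sum>m\<in>{1..snd x}.
     if pos l x y m \<in> S then monom (trm l P Q x y m) (h (pos l x y m)) else 0)"
    unfolding sum.delta'[OF assms] ..
  finally show ?thesis .
qed

lemma inner_collapse:
  assumes l: "l > 0" and rs: "\<rho> + \<sigma> > 0" and fP: "finite (wsupp P)" and fQ: "finite (wsupp Q)"
    and x: "x \<in> wsupp P" and y: "y \<in> wsupp Q"
    and W: "W0 = vval l \<rho> \<sigma> P + vval l \<rho> \<sigma> Q - of_int (\<rho> + \<sigma>)"
    and S: "\<forall>m\<in>{1..snd x}. pos l x y m \<in> S \<longleftrightarrow> wt l \<rho> \<sigma> (pos l x y m) = W0"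
  shows "(\<Sum>m\<in>{1..snd x}. if pos l x y m \<in> S then monom (trm l P Q x y m) (Suc (snd (pos l x y m))) else 0) =
   (if wt l \<rho> \<sigma> x = vval l \<rho> \<sigma> P \<and> wt l \<rho> \<sigma> y = vval l \<rho> \<sigma> Q
    then monom (P x * Q y * (of_nat (snd x) * of_int (fst y) / of_nat l)) (snd x + snd y) else 0)"
    (is "?L = ?R")
proof -
  have wx: "wt l \<rho> \<sigma> x \<le> vval l \<rho> \<sigma> P" and wy: "wt l \<rho> \<sigma> y \<le> vval l \<rho> \<sigma> Q"
    using wt_le_vval[OF fP x] wt_le_vval[OF fQ y] by auto
  have "?L = (\<Sum>m\<in>{1..snd x}. if m = 1 then ?R else 0)"
  proof (rule sum.cong[OF refl])
    fix m assume m: "m \<in> {1..snd x}"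
    have wp: "wt l \<rho> \<sigma> (pos l x y m) = wt l \<rho> \<sigma> x + wt l \<rho> \<sigma> y - of_nat m * of_int (\<rho> + \<sigma>)"
      using m l by (intro wt_pos) auto
    show "(if pos l x y m \<in> S then monom (trm l P Q x y m) (Suc (snd (pos l x y m))) else 0) =
          (if m = 1 then ?R else 0)"
    proof (cases "m = 1")
      case True
      have iff: "pos l x y m \<in> S \<longleftrightarrow> wt l \<rho> \<sigma> x = vval l \<rho> \<sigma> P \<and> wt l \<rho> \<sigma> y = vval l \<rho> \<sigma> Q"
        using S m wp W wx wy True by auto
      have t: "trm l P Q x y m = P x * Q y * (of_nat (snd x) * of_int (fst y) / of_nat l)"
        using True by (simp add: trm_def falling_def)
      have sp: "Suc (snd (pos l x y m)) = snd x + snd y" using True m by (simp add: pos_def)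
      show ?thesis unfolding iff t sp using True by simp
    next
      case False
      with m have m2: "of_nat m \<ge> (2::rat)" by auto
      have "of_nat m * (of_int (\<rho> + \<sigma>)::rat) \<ge> 2 * of_int (\<rho> + \<sigma>)"
        using m2 rs by (intro mult_right_mono) auto
      hence "wt l \<rho> \<sigma> (pos l x y m) < W0" using wp W wx wy rs by simp
      hence "pos l x y m \<notin> S" using S m by auto
      then show ?thesis using False by simp
    qed
  qed
  also have "\<dots> = ?R"
    by (subst sum.delta) (cases "snd x", auto)
  finally show ?thesis .
qed

lemma pderiv_sum: "pderiv (sum f A) = (\<Sum>x\<in>A. pderiv (f x))"
  by (induction A rule: infinite_finite_induct) (simp_all add: pderiv_add)

lemma smult_sum': "smult c (sum f A) = (\<Sum>x\<in>A. smult c (f x))"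
  by (induction A rule: infinite_finite_induct) (simp_all add: smult_add_right)

lemma monom_diff: "monom (a - b) n = monom a n - monom b n"
  by (rule poly_eqI) (simp add: coeff_monom)

lemma x_pderiv_monom: "monom 1 1 * pderiv (monom a n) = monom (of_nat n * a) n"
  by (cases n) (simp_all add: pderiv_monom mult_monom)

lemma fpol_shift:
  assumes "finite (wsupp P)"
  shows "monom 1 (Min (snd ` wsupp (lead l \<rho> \<sigma> P))) * fpol l \<rho> \<sigma> P =
         (\<Sum>e\<in>wsupp (lead l \<rho> \<sigma> P). monom (lead l \<rho> \<sigma> P e) (snd e))"
proof -
  let ?L = "lead l \<rho> \<sigma> P"
  let ?s = "Min (snd ` wsupp ?L)"
  have fL: "finite (wsupp ?L)" using assms by (simp add: wsupp_lead)
  show ?thesis unfolding fpol_def Let_def sum_distrib_left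
  proof (rule sum.cong[OF refl])
    fix e assume e: "e \<in> wsupp ?L"
    have "?s \<le> snd e" using fL e by (intro Min_le) auto
    thus "monom 1 ?s * monom (?L e) (snd e - ?s) = monom (?L e) (snd e)" by (simp add: mult_monom)
  qed
qed

lemma lead_unique:
  assumes "\<rho> \<noteq> 0" "l > 0" "e \<in> wsupp (lead l \<rho> \<sigma> P)" "e' \<in> wsupp (lead l \<rho> \<sigma> P)" "snd e = snd e'"
  shows "e = e'"
proof -
  have "wt l \<rho> \<sigma> e = wt l \<rho> \<sigma> e'" using assms(3,4) by (simp add: wsupp_lead)
  hence "of_int \<rho> * (of_int (fst e) / of_nat l) = (of_int \<rho> * (of_int (fst e') / of_nat l) :: rat)"
    using assms(5) by (simp add: wt_def)
  hence "fst e = fst e'" using assms(1,2) by (simp add: field_simps)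
  thus ?thesis using assms(5) by (simp add: prod_eq_iff)
qed

lemma fpol_coeff0:
  assumes "finite (wsupp P)" "P \<noteq> (\<lambda>_. 0)" "\<rho> \<noteq> 0" "l > 0"
  shows "coeff (fpol l \<rho> \<sigma> P) 0 \<noteq> 0"
proof -
  let ?L = "lead l \<rho> \<sigma> P"
  let ?s = "Min (snd ` wsupp ?L)"
  have fL: "finite (wsupp ?L)" using assms by (simp add: wsupp_lead)
  obtain e1 where e1: "e1 \<in> wsupp P" "wt l \<rho> \<sigma> e1 = vval l \<rho> \<sigma> P" using vval_in[OF assms(1,2)] by blast
  hence ne: "wsupp ?L \<noteq> {}" unfolding wsupp_lead by blast
  have "?s \<in> snd ` wsupp ?L" using fL ne by (intro Min_in) auto
  then obtain e0 where e0: "e0 \<in> wsupp ?L" "snd e0 = ?s" by auto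
  have set: "{e \<in> wsupp ?L. snd e - ?s = 0} = {e0}"
  proof (intro equalityI subsetI)
    fix e assume "e \<in> {e \<in> wsupp ?L. snd e - ?s = 0}"
    hence e: "e \<in> wsupp ?L" "snd e - ?s = 0" by auto
    have "?s \<le> snd e" using fL e by (intro Min_le) auto
    hence "snd e = snd e0" using e e0 by simp
    thus "e \<in> {e0}" using lead_unique[OF assms(3,4) e(1) e0(1)] by simp
  qed (use e0 in auto)
  have "coeff (fpol l \<rho> \<sigma> P) 0 = (\<Sum>e\<in>wsupp ?L. if snd e - ?s = 0 then ?L e else 0)"
    unfolding fpol_def Let_def coeff_sum coeff_monom by (intro sum.cong refl)
  also have "\<dots> = (\<Sum>e\<in>{e \<in> wsupp ?L. snd e - ?s = 0}. ?L e)"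
    by (rule sum.inter_filter[symmetric, OF fL])
  also have "\<dots> = ?L e0" unfolding set by simp
  finally show ?thesis using e0 by (simp add: wsupp_def)
qed



lemma key:
  fixes P F :: "'a::field_char_0 wel"
  assumes l: "l > 0" and rs: "\<rho> + \<sigma> > 0" and rho: "\<rho> > 0"
    and fP: "finite (wsupp P)" and fF: "finite (wsupp F)"
    and P0: "P \<noteq> (\<lambda>_. 0)" and hom: "homogeneous l \<rho> \<sigma> F"
    and cr: "comm_rs l \<rho> \<sigma> P F = lead l \<rho> \<sigma> P"
  defines "A \<equiv> (\<Sum>e\<in>wsupp (lead l \<rho> \<sigma> P). monom (lead l \<rho> \<sigma> P e) (snd e))"
    and "G \<equiv> (\<Sum>e\<in>wsupp F. monom (F e) (snd e))"
    and "cF \<equiv> (of_rat (vval l \<rho> \<sigma> F / of_int \<rho>) :: 'a)"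
    and "cP \<equiv> (of_rat (vval l \<rho> \<sigma> P / of_int \<rho>) :: 'a)"
  shows "vval l \<rho> \<sigma> F = of_int (\<rho> + \<sigma>)"
    and "A = smult cF (pderiv A * G) - smult cP (A * pderiv G)"
proof -
  define vP where "vP = vval l \<rho> \<sigma> P"
  define vF where "vF = vval l \<rho> \<sigma> F"
  define W0 where "W0 = vP + vF - of_int (\<rho> + \<sigma>)"
  define C where "C = wcomm l P F"
  define LP where "LP = lead l \<rho> \<sigma> P"
  obtain e1 where e1: "e1 \<in> wsupp P" "wt l \<rho> \<sigma> e1 = vP" using vval_in[OF fP P0] vP_def by blast
  have LPe1: "LP e1 = P e1" using e1 by (simp add: LP_def lead_def vP_def)
  have LP0: "LP \<noteq> (\<lambda>_. 0)"
  proof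
    assume "LP = (\<lambda>_. 0)"
    hence "LP e1 = 0" by simp
    thus False using LPe1 e1 by (simp add: wsupp_def)
  qed
  have ncond: "\<not> (C = (\<lambda>_. 0) \<or> vval l \<rho> \<sigma> C < W0)"
  proof
    assume "C = (\<lambda>_. 0) \<or> vval l \<rho> \<sigma> C < W0"
    hence "comm_rs l \<rho> \<sigma> P F = (\<lambda>_. 0)" by (simp add: comm_rs_def C_def W0_def vP_def vF_def)
    thus False using cr LP0 by (simp add: LP_def)
  qed
  hence C0: "C \<noteq> (\<lambda>_. 0)" and CW: "\<not> vval l \<rho> \<sigma> C < W0" by auto
  have lC: "lead l \<rho> \<sigma> C = LP"
    using cr ncond by (simp add: comm_rs_def C_def W0_def vP_def vF_def LP_def)
  define Im where "Im = (\<lambda>(x,y,m). pos l x y m) ` (SIGMA x:wsupp P. wsupp F \<times> {..snd x})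
     \<union> (\<lambda>(x,y,m). pos l x y m) ` (SIGMA x:wsupp F. wsupp P \<times> {..snd x})"
  have fIm: "finite Im" unfolding Im_def using fP fF by (auto intro!: finite_SigmaI)
  have Im1: "pos l x y m \<in> Im" if "x \<in> wsupp P" "y \<in> wsupp F" "m \<le> snd x" for x y m
    unfolding Im_def using that by (intro UnI1 image_eqI[where x="(x,y,m)"]) auto
  have Im2: "pos l x y m \<in> Im" if "x \<in> wsupp F" "y \<in> wsupp P" "m \<le> snd x" for x y m
    unfolding Im_def using that by (intro UnI2 image_eqI[where x="(x,y,m)"]) auto
  have suppC: "wsupp C \<subseteq> Im"
  proof
    fix e assume "e \<in> wsupp C"
    hence "wmult l P F e \<noteq> 0 \<or> wmult l F P e \<noteq> 0" by (auto simp: wsupp_def C_def wcomm_def)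
    thus "e \<in> Im" using wmult_nz Im1 Im2 by metis
  qed
  have fC: "finite (wsupp C)" using suppC fIm by (rule finite_subset)
  have vanish: "C e = 0" if "wt l \<rho> \<sigma> e > W0" for e
  proof -
    have "M1 l P F e = 0" using that by (intro M1_vanish[OF fP fF l rs]) (simp add: W0_def vP_def vF_def)
    moreover have "M1 l F P e = 0" using that by (intro M1_vanish[OF fF fP l rs]) (simp add: W0_def vP_def vF_def)
    ultimately show ?thesis by (simp add: C_def wcomm_alt)
  qed
  have VW: "vval l \<rho> \<sigma> C = W0"
  proof -
    obtain e0 where e0: "e0 \<in> wsupp C" "wt l \<rho> \<sigma> e0 = vval l \<rho> \<sigma> C" using vval_in[OF fC C0] by blast
    have "\<not> vval l \<rho> \<sigma> C > W0"
    proof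
      assume "vval l \<rho> \<sigma> C > W0"
      hence "C e0 = 0" using e0 vanish by simp
      thus False using e0 by (simp add: wsupp_def)
    qed
    thus ?thesis using CW by simp
  qed
  have lCe: "lead l \<rho> \<sigma> C e \<noteq> 0 \<Longrightarrow> C e \<noteq> 0 \<and> wt l \<rho> \<sigma> e = W0 \<and> lead l \<rho> \<sigma> C e = C e" for e
    using VW by (auto simp: lead_def wsupp_def split: if_splits)
  have vPW: "vP = W0"
  proof -
    have "lead l \<rho> \<sigma> C e1 \<noteq> 0" using lC LPe1 e1 by (simp add: wsupp_def)
    thus ?thesis using lCe e1 by simp
  qed
  show vF: "vval l \<rho> \<sigma> F = of_int (\<rho> + \<sigma>)" using vPW by (simp add: W0_def vF_def)
  define S where "S = {e\<in>Im. wt l \<rho> \<sigma> e = W0}"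
  have fS: "finite S" using fIm by (simp add: S_def)
  define SP where "SP = wsupp LP"
  have SPeq: "SP = {e\<in>wsupp P. wt l \<rho> \<sigma> e = vP}" by (simp add: SP_def LP_def wsupp_lead vP_def)
  have SPS: "SP \<subseteq> S"
  proof
    fix e assume "e \<in> SP"
    hence "lead l \<rho> \<sigma> C e \<noteq> 0" using lC by (simp add: SP_def wsupp_def)
    hence "C e \<noteq> 0" "wt l \<rho> \<sigma> e = W0" using lCe by auto
    thus "e \<in> S" using suppC by (auto simp: S_def wsupp_def)
  qed
  have Ceq: "C e = LP e" if "e \<in> SP" for e
  proof -
    have "lead l \<rho> \<sigma> C e \<noteq> 0" using lC that by (simp add: SP_def wsupp_def)
    thus ?thesis using lCe lC by metis
  qed
  have Cz: "C e = 0" if "e \<in> S" "e \<notin> SP" for e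
  proof (rule ccontr)
    assume "C e \<noteq> 0"
    hence "lead l \<rho> \<sigma> C e = C e" using that VW by (simp add: lead_def wsupp_def S_def)
    hence "LP e \<noteq> 0" using lC \<open>C e \<noteq> 0\<close> by simp
    thus False using that by (simp add: SP_def wsupp_def)
  qed
  have homF: "wt l \<rho> \<sigma> y = vF" if "y \<in> wsupp F" for y
  proof -
    have "lead l \<rho> \<sigma> F y \<noteq> 0" using hom that by (simp add: homogeneous_def wsupp_def)
    thus ?thesis by (simp add: lead_def vF_def split: if_splits)
  qed
  define Y where "Y = (\<Sum>e\<in>S. monom (C e) (Suc (snd e)))"
  have Y1: "Y = monom 1 1 * A"
  proof -
    have "Y = (\<Sum>e\<in>SP. monom (C e) (Suc (snd e)))"
      unfolding Y_def using Cz by (intro sum.mono_neutral_right[OF fS SPS]) auto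
    also have "\<dots> = (\<Sum>e\<in>SP. monom (LP e) (Suc (snd e)))" using Ceq by simp
    also have "\<dots> = monom 1 1 * A" by (simp add: A_def LP_def SP_def sum_distrib_left mult_monom)
    finally show ?thesis .
  qed
  have T1: "(\<Sum>e\<in>S. monom (M1 l P F e) (Suc (snd e))) = (\<Sum>x\<in>wsupp P. \<Sum>y\<in>wsupp F.
      if wt l \<rho> \<sigma> x = vP \<and> wt l \<rho> \<sigma> y = vF
      then monom (P x * F y * (of_nat (snd x) * of_int (fst y) / of_nat l)) (snd x + snd y) else 0)"
    unfolding M1_exchange[OF fS]
  proof (intro sum.cong refl)
    fix x y assume x: "x \<in> wsupp P" and y: "y \<in> wsupp F"
    show "(\<Sum>m\<in>{1..snd x}. if pos l x y m \<in> S then monom (trm l P F x y m) (Suc (snd (pos l x y m))) else 0) =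
      (if wt l \<rho> \<sigma> x = vP \<and> wt l \<rho> \<sigma> y = vF
      then monom (P x * F y * (of_nat (snd x) * of_int (fst y) / of_nat l)) (snd x + snd y) else 0)"
      unfolding vP_def vF_def
      by (rule inner_collapse[OF l rs fP fF x y]) (auto simp: W0_def vP_def vF_def S_def intro: Im1[OF x y])
  qed
  have T2: "(\<Sum>e\<in>S. monom (M1 l F P e) (Suc (snd e))) = (\<Sum>y\<in>wsupp F. \<Sum>x\<in>wsupp P.
      if wt l \<rho> \<sigma> y = vF \<and> wt l \<rho> \<sigma> x = vP
      then monom (F y * P x * (of_nat (snd y) * of_int (fst x) / of_nat l)) (snd y + snd x) else 0)"
    unfolding M1_exchange[OF fS]
  proof (intro sum.cong refl)
    fix x y assume y: "y \<in> wsupp P" and x: "x \<in> wsupp F"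
    show "(\<Sum>m\<in>{1..snd x}. if pos l x y m \<in> S then monom (trm l F P x y m) (Suc (snd (pos l x y m))) else 0) =
      (if wt l \<rho> \<sigma> x = vF \<and> wt l \<rho> \<sigma> y = vP
      then monom (F x * P y * (of_nat (snd x) * of_int (fst y) / of_nat l)) (snd x + snd y) else 0)"
      unfolding vP_def vF_def
      by (rule inner_collapse[OF l rs fF fP x y]) (auto simp: W0_def vP_def vF_def S_def intro: Im2[OF x y])
  qed
  have coef: "of_nat (snd x) * of_int (fst y) / of_nat l - of_nat (snd y) * of_int (fst x) / of_nat l
      = cF * of_nat (snd x) - cP * of_nat (snd y)"
    if wx: "wt l \<rho> \<sigma> x = vP" and wy: "wt l \<rho> \<sigma> y = vF" for x y
  proof -
    have r: "(of_nat (snd x) * of_int (fst y) / of_nat l - of_nat (snd y) * of_int (fst x) / of_nat l :: rat)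
      = vF / of_int \<rho> * of_nat (snd x) - vP / of_int \<rho> * of_nat (snd y)"
    proof -
      have h1: "of_int \<rho> * of_int (fst x) + of_int \<sigma> * (of_nat l * of_nat (snd x)) = vP * (of_nat l :: rat)"
        using wx l by (simp add: wt_def field_simps)
      have h2: "of_int \<rho> * of_int (fst y) + of_int \<sigma> * (of_nat l * of_nat (snd y)) = vF * (of_nat l :: rat)"
        using wy l by (simp add: wt_def field_simps)
      have "vP * (of_nat l * of_nat (snd y)) + of_int \<rho> * (of_int (fst y) * of_nat (snd x)) =
        vF * (of_nat l * of_nat (snd x)) + of_int \<rho> * (of_int (fst x) * (of_nat (snd y) :: rat))"
        using h1 h2 by algebra
      thus ?thesis using rho l by (simp add: field_simps)
    qed
    have "(of_nat (snd x) * of_int (fst y) / of_nat l - of_nat (snd y) * of_int (fst x) / of_nat l :: 'a)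
      = of_rat (of_nat (snd x) * of_int (fst y) / of_nat l - of_nat (snd y) * of_int (fst x) / of_nat l)"
      by (simp add: of_rat_diff of_rat_mult of_rat_divide)
    also have "\<dots> = of_rat (vF / of_int \<rho> * of_nat (snd x) - vP / of_int \<rho> * of_nat (snd y))" by (simp only: r)
    also have "\<dots> = cF * of_nat (snd x) - cP * of_nat (snd y)"
      unfolding cF_def cP_def vF_def vP_def by (simp only: of_rat_diff of_rat_mult of_rat_of_nat_eq)
    finally show ?thesis .
  qed
  have Y2: "Y = (\<Sum>x\<in>SP. \<Sum>y\<in>wsupp F. monom (LP x * F y * (cF * of_nat (snd x) - cP * of_nat (snd y))) (snd x + snd y))"
  proof -
    have "Y = (\<Sum>e\<in>S. monom (M1 l P F e) (Suc (snd e))) - (\<Sum>e\<in>S. monom (M1 l F P e) (Suc (snd e)))"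
      unfolding Y_def C_def wcomm_alt monom_diff sum_subtractf ..
    also have "\<dots> = (\<Sum>x\<in>wsupp P. \<Sum>y\<in>wsupp F.
      if wt l \<rho> \<sigma> x = vP
      then monom (P x * F y * (cF * of_nat (snd x) - cP * of_nat (snd y))) (snd x + snd y) else 0)"
      unfolding T1 T2 sum.swap[of _ "wsupp F"] sum_subtractf[symmetric]
    proof (intro sum.cong refl)
      fix x y assume x: "x \<in> wsupp P" and y: "y \<in> wsupp F"
      show "(if wt l \<rho> \<sigma> x = vP \<and> wt l \<rho> \<sigma> y = vF
           then monom (P x * F y * (of_nat (snd x) * of_int (fst y) / of_nat l)) (snd x + snd y) else 0) -
          (if wt l \<rho> \<sigma> y = vF \<and> wt l \<rho> \<sigma> x = vP
           then monom (F y * P x * (of_nat (snd y) * of_int (fst x) / of_nat l)) (snd y + snd x) else 0) =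
          (if wt l \<rho> \<sigma> x = vP
           then monom (P x * F y * (cF * of_nat (snd x) - cP * of_nat (snd y))) (snd x + snd y) else 0)"
      proof (cases "wt l \<rho> \<sigma> x = vP")
        case True
        have wy: "wt l \<rho> \<sigma> y = vF" using homF y by simp
        have e: "P x * F y * (of_nat (snd x) * of_int (fst y) / of_nat l) -
            F y * P x * (of_nat (snd y) * of_int (fst x) / of_nat l) =
            P x * F y * (cF * of_nat (snd x) - cP * of_nat (snd y))"
          unfolding coef[OF True wy, symmetric] by (simp add: algebra_simps)
        have "monom (P x * F y * (of_nat (snd x) * of_int (fst y) / of_nat l)) (snd x + snd y) -
            monom (F y * P x * (of_nat (snd y) * of_int (fst x) / of_nat l)) (snd y + snd x) =
            monom (P x * F y * (cF * of_nat (snd x) - cP * of_nat (snd y))) (snd x + snd y)"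
          unfolding e[symmetric] monom_diff by (simp add: add.commute)
        then show ?thesis using True wy by simp
      qed simp
    qed
    also have "\<dots> = (\<Sum>x\<in>SP. \<Sum>y\<in>wsupp F. monom (P x * F y * (cF * of_nat (snd x) - cP * of_nat (snd y))) (snd x + snd y))"
      unfolding SPeq using fP by (simp add: sum.inter_filter) (intro sum.cong refl, simp)
    also have "\<dots> = (\<Sum>x\<in>SP. \<Sum>y\<in>wsupp F. monom (LP x * F y * (cF * of_nat (snd x) - cP * of_nat (snd y))) (snd x + snd y))"
      by (intro sum.cong refl) (simp add: SPeq LP_def lead_def vP_def)
    finally show ?thesis .
  qed
  have dA: "monom 1 1 * pderiv A = (\<Sum>x\<in>SP. monom (of_nat (snd x) * LP x) (snd x))"
    unfolding A_def SP_def LP_def pderiv_sum sum_distrib_left x_pderiv_monom ..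
  have dG: "monom 1 1 * pderiv G = (\<Sum>y\<in>wsupp F. monom (of_nat (snd y) * F y) (snd y))"
    unfolding G_def pderiv_sum sum_distrib_left x_pderiv_monom ..
  have A': "A = (\<Sum>x\<in>SP. monom (LP x) (snd x))" by (simp add: A_def SP_def LP_def)
  have Y3: "monom 1 1 * (smult cF (pderiv A * G) - smult cP (A * pderiv G)) = Y"
  proof -
    have "monom 1 1 * (smult cF (pderiv A * G) - smult cP (A * pderiv G))
      = smult cF ((monom 1 1 * pderiv A) * G) - smult cP (A * (monom 1 1 * pderiv G))"
      by (simp add: algebra_simps)
    also have "\<dots> = (\<Sum>x\<in>SP. \<Sum>y\<in>wsupp F. monom (cF * (of_nat (snd x) * LP x * F y)) (snd x + snd y))
       - (\<Sum>x\<in>SP. \<Sum>y\<in>wsupp F. monom (cP * (LP x * (of_nat (snd y) * F y))) (snd x + snd y))"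
      unfolding dA dG unfolding A' G_def sum_product smult_sum' by (simp add: mult_monom smult_monom)
    also have "\<dots> = Y" unfolding Y2 sum_subtractf[symmetric] monom_diff[symmetric]
      by (intro sum.cong refl arg_cong2[where f=monom]) (simp_all add: algebra_simps)
    finally show ?thesis .
  qed
  have "monom 1 1 * A = monom 1 1 * (smult cF (pderiv A * G) - smult cP (A * pderiv G))"
    using Y1 Y3 by simp
  moreover have "monom (1::'a) 1 \<noteq> 0" by simp
  ultimately show "A = smult cF (pderiv A * G) - smult cP (A * pderiv G)"
    by (simp only: mult_cancel_left) simp
qed



lemma dvd_x_pow_root:
  fixes q :: "'a::field poly"
  assumes q: "prime_elem q" and d: "q dvd monom 1 t"
  shows "poly q 0 = 0"
proof (rule ccontr)
  assume nz: "poly q 0 \<noteq> 0"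
  have "q dvd [:0,1:]^t" using d by (simp add: monom_altdef)
  hence "q dvd [:0,1:]" by (rule prime_elem_dvd_power[OF q])
  then obtain r where r: "[:0,1:] = q * r" by (auto elim: dvdE)
  have "poly q 0 * poly r 0 = 0" using arg_cong[OF r, of "\<lambda>p. poly p 0"] by simp
  hence "poly r 0 = 0" using nz by simp
  hence "[:-0,1:] dvd r" by (simp only: poly_eq_0_iff_dvd)
  then obtain r' where r': "r = [:0,1:] * r'" by (auto elim: dvdE)
  have h: "[:0,1:] * (q * r') = [:0,1:] * 1" using r r' by (metis mult.assoc mult.commute mult.right_neutral)
  have "[:0,1::'a:] \<noteq> 0" by simp
  hence "q * r' = 1" using h mult_left_cancel by blast
  hence "is_unit q" by (metis dvd_triv_left)
  thus False using q by (simp add: prime_elem_def)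
qed

theorem proposition3p6:
  fixes l :: nat and \<rho> \<sigma> :: int and P F :: "'a::field_char_0 wel"
  assumes "l > 0"
    and "(\<rho>, \<sigma>) \<in> Vdir" and "\<sigma> \<le> 0"
    and "welem P" and "welem F"
    and "P \<noteq> (\<lambda>_. 0)" and "F \<noteq> (\<lambda>_. 0)"
    and "homogeneous l \<rho> \<sigma> F"
    and "comm_rs l \<rho> \<sigma> P F = lead l \<rho> \<sigma> P"
  shows "separable (fpol l \<rho> \<sigma> F) \<and>
         (\<forall>g. irreducible g \<and> g dvd fpol l \<rho> \<sigma> P \<longrightarrow> g dvd fpol l \<rho> \<sigma> F)"
proof -
  note l = assms(1)
  have rs: "\<rho> + \<sigma> > 0" using assms(2) by (simp add: Vdir_def)
  have rho: "\<rho> > 0" using rs assms(3) by simp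
  have fP: "finite (wsupp P)" and fF: "finite (wsupp F)" using assms(4,5) by (simp_all add: welem_def)
  define A where "A = (\<Sum>e\<in>wsupp (lead l \<rho> \<sigma> P). monom (lead l \<rho> \<sigma> P e) (snd e))"
  define G where "G = (\<Sum>e\<in>wsupp F. monom (F e) (snd e))"
  define cF where "cF = (of_rat (vval l \<rho> \<sigma> F / of_int \<rho>) :: 'a)"
  define cP where "cP = (of_rat (vval l \<rho> \<sigma> P / of_int \<rho>) :: 'a)"
  have vF: "vval l \<rho> \<sigma> F = of_int (\<rho> + \<sigma>)"
    using key(1)[OF l rs rho fP fF assms(6,8,9)] .
  have eq: "A = smult cF (pderiv A * G) - smult cP (A * pderiv G)"
    unfolding A_def G_def cF_def cP_def using key(2)[OF l rs rho fP fF assms(6,8,9)] .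
  have cF0: "cF \<noteq> 0" using vF rs rho by (simp add: cF_def)
  define f where "f = fpol l \<rho> \<sigma> P"
  define g where "g = fpol l \<rho> \<sigma> F"
  obtain s where As: "A = monom 1 s * f" using fpol_shift[OF fP] unfolding A_def f_def by metis
  have hF: "lead l \<rho> \<sigma> F = F" using assms(8) by (simp add: homogeneous_def)
  obtain t where Gt: "G = monom 1 t * g" using fpol_shift[OF fF, of l \<rho> \<sigma>] unfolding G_def g_def hF by metis
  have f0: "coeff f 0 \<noteq> 0" unfolding f_def using fpol_coeff0[OF fP assms(6)] rho l by simp
  have g0: "coeff g 0 \<noteq> 0" unfolding g_def using fpol_coeff0[OF fF assms(7)] rho l by simp
  have fnz: "f \<noteq> 0" and gnz: "g \<noteq> 0" using f0 g0 by auto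
  have A0: "A \<noteq> 0" using As fnz by simp
  have sep: "coprime g (pderiv g)"
  proof (rule ccontr)
    assume "\<not> coprime g (pderiv g)"
    then obtain c where c: "c dvd g" "c dvd pderiv g" "\<not> is_unit c" by (auto simp: coprime_def)
    have "c \<noteq> 0" using c gnz by auto
    then obtain q where qi: "irreducible q" "q dvd c" using irr_factor_exists c(3) by blast
    have q: "prime_elem q" using qi(1) by (rule field_poly_irreducible_imp_prime)
    have qg: "q dvd g" and qg': "q dvd pderiv g" using qi c dvd_trans by blast+
    obtain e u where gu: "g = q^e * u" and nu: "\<not> q dvd u" using prime_decomp'[OF gnz q] by blast
    have "e \<noteq> 0" using qg nu gu by (cases e) auto
    have "e \<noteq> 1"
    proof
      assume e1: "e = 1"
      have "pderiv g = pderiv q * u + q * pderiv u" using gu e1 by (simp add: pderiv_mult)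
      hence "q dvd pderiv q * u" using qg' by (metis dvd_add_left_iff dvd_triv_left)
      thus False using q nu prime_not_dvd_pderiv[OF q] by (simp add: prime_elem_dvd_mult_iff)
    qed
    hence e2: "e \<ge> 2" using \<open>e \<noteq> 0\<close> by simp
    have qeg: "q^e dvd g" using gu by simp
    have qG: "q^e dvd G" using qeg Gt by simp
    have "q^(e-1) dvd g" using qeg by (meson diff_le_self dvd_trans le_imp_power_dvd)
    moreover have "q^(e-1) dvd pderiv g" using pderiv_pow_dvd[OF qeg] .
    ultimately have qG': "q^(e-1) dvd pderiv G" using Gt by (simp add: pderiv_mult)
    show False using alg1[OF eq A0 q e2 qG qG'] .
  qed
  have fac: "g' dvd g" if gi: "irreducible g'" and gd: "g' dvd f" for g'
  proof -
    have q: "prime_elem g'" using gi by (rule field_poly_irreducible_imp_prime)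
    have "g' dvd A" using As gd by simp
    hence "g' dvd G" using alg2[OF eq cF0 A0 q] by blast
    hence "g' dvd monom 1 t \<or> g' dvd g" using Gt q by (simp add: prime_elem_dvd_mult_iff)
    moreover have "\<not> g' dvd monom 1 t"
    proof
      assume "g' dvd monom 1 t"
      hence "poly g' 0 = 0" using q by (intro dvd_x_pow_root)
      moreover obtain h where "f = g' * h" using gd by (auto elim: dvdE)
      ultimately have "poly f 0 = 0" by simp
      thus False using f0 by (simp add: poly_0_coeff_0)
    qed
    ultimately show ?thesis by blast
  qed
  show ?thesis using sep fac by (simp add: separable_def f_def g_def)
qed

end
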